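(* Let $q\ge5$ and let $\mu\in\mathbb F_q^*\setminus\{1\}$ if $q$ is even or $q\equiv0\pmod3$, and $\mu\in\mathbb F_q^*\setminus\{1,1/9\}$ if $q$ is odd and $q\not\equiv0\pmod3$. The number of $\overline{1_{\mathcal C}}$-planes containing the line $\ell_\mu$ equals $\widetilde N_1(\mu)$ if $\mu$ is a square in $\mathbb F_q$, and $\widetilde N_1(\mu)+1$ otherwise.
   Context: In $\mathrm{PG}(3,q)$ with points $\mathbf P(x_0,x_1,x_2,x_3)$, the twisted cubic is $\mathcal C=\{\mathbf P(t^3,t^2,t,1):t\in\mathbb F_q\}\cup\{\mathbf P(1,0,0,0)\}$. Its osculating planes ($\Gamma$-planes) are $x_0-3tx_1+3t^2x_2-t^3x_3=0$ for $t\in\mathbb F_q$ and $x_3=0$. A $\overline{1_{\mathcal C}}$-plane is a plane which is not a $\Gamma$-plane and contains exactly one point of $\mathcal C$. $\ell_\mu$ is the line through $\mathbf P(0,\mu,0,1)$ and $\mathbf P(1,0,1,0)$. $\widetilde N_1(\mu)$ is the number of $c\in\mathbb F_q^*$ such that $t^3+ct^2-t-\mu c=0$ has exactly one solution $t\in\mathbb F_q$. *)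

theory Defs
  imports Main
begin

type_synonym 'a vec4 = "'a \<times> 'a \<times> 'a \<times> 'a"

definition smult4 :: "'a::field \<Rightarrow> 'a vec4 \<Rightarrow> 'a vec4" where
  "smult4 c v = (case v of (x0,x1,x2,x3) \<Rightarrow> (c*x0, c*x1, c*x2, c*x3))"

definition add4 :: "'a::field vec4 \<Rightarrow> 'a vec4 \<Rightarrow> 'a vec4" where
  "add4 v w = (case v of (x0,x1,x2,x3) \<Rightarrow> case w of (y0,y1,y2,y3) \<Rightarrow>
      (x0+y0, x1+y1, x2+y2, x3+y3))"

definition dot4 :: "'a::field vec4 \<Rightarrow> 'a vec4 \<Rightarrow> 'a" where
  "dot4 v w = (case v of (x0,x1,x2,x3) \<Rightarrow> case w of (y0,y1,y2,y3) \<Rightarrow>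
      x0*y0 + x1*y1 + x2*y2 + x3*y3)"

definition proj :: "'a::field vec4 \<Rightarrow> 'a vec4 set" where
  "proj v = {smult4 c v | c. c \<noteq> 0}"

text \<open>Points of PG(3,q); planes are represented by their (dual) coordinate classes.\<close>
definition PG3_points :: "'a::field vec4 set set" where
  "PG3_points = {proj v | v. v \<noteq> (0,0,0,0)}"

definition PG3_planes :: "'a::field vec4 set set" where
  "PG3_planes = {proj a | a. a \<noteq> (0,0,0,0)}"

definition incident :: "'a::field vec4 set \<Rightarrow> 'a vec4 set \<Rightarrow> bool" where
  "incident H P \<longleftrightarrow> (\<exists>a\<in>H. \<exists>x\<in>P. dot4 a x = 0)"

definition points_of_plane :: "'a::field vec4 set \<Rightarrow> 'a vec4 set set" where
  "points_of_plane H = {P \<in> PG3_points. incident H P}"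

definition line_through :: "'a::field vec4 \<Rightarrow> 'a vec4 \<Rightarrow> 'a vec4 set set" where
  "line_through u w = {proj (add4 (smult4 a u) (smult4 b w)) | a b. (a, b) \<noteq> (0, 0)}"

definition twisted_cubic :: "'a::field vec4 set set" where
  "twisted_cubic = {proj (t^3, t^2, t, 1) | t. True} \<union> {proj (1,0,0,0)}"

definition Gamma_planes :: "'a::field vec4 set set" where
  "Gamma_planes = {proj (1, -3*t, 3*t^2, -(t^3)) | t. True} \<union> {proj (0,0,0,1)}"

definition one_C_bar_plane :: "'a::field vec4 set \<Rightarrow> bool" where
  "one_C_bar_plane H \<longleftrightarrow> H \<in> PG3_planes \<and> H \<notin> Gamma_planes \<and>
     card {P \<in> twisted_cubic. incident H P} = 1"

definition ell :: "'a::field \<Rightarrow> 'a vec4 set set" where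
  "ell \<mu> = line_through (0, \<mu>, 0, 1) (1, 0, 1, 0)"

definition N1_tilde :: "'a::{field,finite} \<Rightarrow> nat" where
  "N1_tilde \<mu> = card {c. c \<noteq> 0 \<and>
      card {t. t^3 + c*t^2 - t - \<mu>*c = 0} = 1}"

end

theory Submission
  imports Defs
begin


lemma smult4_smult4: "smult4 c (smult4 d v) = smult4 (c*d) v"
  by (cases v) (simp add: smult4_def mult.assoc)

lemma smult4_one: "smult4 1 v = v"
  by (cases v) (simp add: smult4_def)

lemma proj_smult: "k \<noteq> 0 \<Longrightarrow> proj (smult4 k v) = proj v"
  unfolding proj_def
proof (intro set_eqI iffI)
  fix x assume k: "k \<noteq> 0"
  { assume "x \<in> {smult4 c (smult4 k v) |c. c \<noteq> 0}"
    then obtain c where "c \<noteq> 0" "x = smult4 c (smult4 k v)" by auto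
    then show "x \<in> {smult4 c v |c. c \<noteq> 0}" using k by (auto simp: smult4_smult4) }
  { assume "x \<in> {smult4 c v |c. c \<noteq> 0}"
    then obtain c where c: "c \<noteq> 0" "x = smult4 c v" by auto
    have "x = smult4 (c/k) (smult4 k v)" using c k by (simp add: smult4_smult4)
    then show "x \<in> {smult4 c (smult4 k v) |c. c \<noteq> 0}" using c k by auto }
qed

lemma in_proj_self: "v \<in> proj v"
  unfolding proj_def using smult4_one[of v] by (metis (mono_tags, lifting) mem_Collect_eq one_neq_zero)

lemma proj_eqD: "proj a = proj b \<Longrightarrow> \<exists>k. k \<noteq> 0 \<and> b = smult4 k a"
  using in_proj_self[of b] unfolding proj_def by auto

lemma dot_smult: "dot4 (smult4 c a) (smult4 d x) = c*d*dot4 a x"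
  by (cases a; cases x) (simp add: smult4_def dot4_def algebra_simps)

lemma incident_proj: "incident (proj a) (proj x) \<longleftrightarrow> dot4 a x = 0"
proof
  assume "incident (proj a) (proj x)"
  then obtain c d where "c \<noteq> 0" "d \<noteq> 0" "dot4 (smult4 c a) (smult4 d x) = 0"
    unfolding incident_def proj_def by auto
  then show "dot4 a x = 0" by (simp add: dot_smult)
next
  assume "dot4 a x = 0"
  then show "incident (proj a) (proj x)" unfolding incident_def
    using in_proj_self by blast
qed

lemma ell_eq: "ell \<mu> = {proj (b, a*\<mu>, b, a) | a b. (a, b) \<noteq> (0, 0)}"
  unfolding ell_def line_through_def by (simp add: smult4_def add4_def)

lemma ell_mem: "(a, b) \<noteq> (0, 0) \<Longrightarrow> proj (b, a*\<mu>, b, a) \<in> ell \<mu>"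
  unfolding ell_eq by (rule CollectI, rule exI[of _ a], rule exI[of _ b], simp)

lemma ell_sub:
  fixes a0 a1 a2 a3 :: "'a::field"
  shows "ell \<mu> \<subseteq> points_of_plane (proj (a0,a1,a2,a3)) \<longleftrightarrow> a0 + a2 = 0 \<and> a1*\<mu> + a3 = 0"
proof
  assume h: "ell \<mu> \<subseteq> points_of_plane (proj (a0,a1,a2,a3))"
  have "proj (0, 1*\<mu>, 0, 1) \<in> ell \<mu>" by (rule ell_mem) simp
  then have "proj (0, 1*\<mu>, 0, 1) \<in> points_of_plane (proj (a0,a1,a2,a3))" using h by (rule subsetD[rotated])
  then have "incident (proj (a0,a1,a2,a3)) (proj (0, 1*\<mu>, 0, 1))" unfolding points_of_plane_def by simp
  then have 1: "a1*\<mu> + a3 = 0" unfolding incident_proj by (simp add: dot4_def)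
  have "proj (1, 0*\<mu>, 1, 0) \<in> ell \<mu>" by (rule ell_mem) simp
  then have "proj (1, 0*\<mu>, 1, 0) \<in> points_of_plane (proj (a0,a1,a2,a3))" using h by (rule subsetD[rotated])
  then have "incident (proj (a0,a1,a2,a3)) (proj (1, 0*\<mu>, 1, 0))" unfolding points_of_plane_def by simp
  then have 2: "a0 + a2 = 0" unfolding incident_proj by (simp add: dot4_def)
  show "a0 + a2 = 0 \<and> a1*\<mu> + a3 = 0" using 1 2 by simp
next
  assume h: "a0 + a2 = 0 \<and> a1*\<mu> + a3 = 0"
  show "ell \<mu> \<subseteq> points_of_plane (proj (a0,a1,a2,a3))"
  proof
    fix P assume "P \<in> ell \<mu>"
    then obtain a b where ab: "(a,b) \<noteq> (0,0)" "P = proj (b, a*\<mu>, b, a)" unfolding ell_eq by blast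
    have nz: "(b, a*\<mu>, b, a) \<noteq> (0,0,0,0)" using ab by auto
    have "dot4 (a0,a1,a2,a3) (b, a*\<mu>, b, a) = b*(a0+a2) + a*(a1*\<mu>+a3)"
      by (simp add: dot4_def algebra_simps)
    then have d: "dot4 (a0,a1,a2,a3) (b, a*\<mu>, b, a) = 0" using h by simp
    have "P \<in> PG3_points" unfolding PG3_points_def using ab(2) nz by blast
    moreover have "incident (proj (a0,a1,a2,a3)) P" unfolding ab(2) incident_proj by (rule d)
    ultimately show "P \<in> points_of_plane (proj (a0,a1,a2,a3))"
      unfolding points_of_plane_def by simp
  qed
qed

definition tcp :: "'a::field \<Rightarrow> 'a vec4 set" where "tcp t = proj (t^3, t^2, t, 1)"

lemma tcp_inj: "inj tcp"
proof (rule injI)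
  fix s t :: 'a assume "tcp s = tcp t"
  then obtain k where "k \<noteq> 0" "(t^3,t^2,t,1) = smult4 k (s^3,s^2,s,1)"
    unfolding tcp_def using proj_eqD by blast
  then show "s = t" by (simp add: smult4_def)
qed

lemma tcp_ne: "tcp t \<noteq> proj (1,0,0,0)"
proof
  assume "tcp t = proj (1,0,0,0)"
  then obtain k where "k \<noteq> 0" "(1,0,0,0) = smult4 k (t^3,t^2,t,1)"
    unfolding tcp_def using proj_eqD by metis
  then show False by (simp add: smult4_def)
qed

lemma tc_set: "{P \<in> twisted_cubic. incident (proj a) P} =
   tcp ` {t. dot4 a (t^3,t^2,t,1) = 0} \<union> (if dot4 a (1,0,0,0) = 0 then {proj (1,0,0,0)} else {})"
  unfolding twisted_cubic_def by (auto simp: incident_proj tcp_def)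

lemma tc_card:
  fixes a :: "'a::{field,finite} vec4"
  shows "card {P \<in> twisted_cubic. incident (proj a) P} =
   card {t. dot4 a (t^3,t^2,t,1) = 0} + (if dot4 a (1,0,0,0) = 0 then 1 else 0)"
proof -
  have "card (tcp ` {t. dot4 a (t^3,t^2,t,1) = 0}) = card {t. dot4 a (t^3,t^2,t,1) = 0}"
    by (rule card_image) (meson inj_on_subset subset_UNIV tcp_inj)
  moreover have "proj (1,0,0,0) \<notin> tcp ` {t. dot4 a (t^3,t^2,t,1) = 0}" using tcp_ne by fastforce
  ultimately show ?thesis unfolding tc_set by auto
qed



lemma orbit3:
  fixes f :: "'b \<Rightarrow> 'b"
  shows "finite A \<Longrightarrow> (\<forall>x\<in>A. f x \<in> A \<and> f (f (f x)) = x \<and> f x \<noteq> x) \<Longrightarrow> 3 dvd card A"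
proof (induction "card A" arbitrary: A rule: less_induct)
  case (less A)
  show ?case
  proof (cases "A = {}")
    case True then show ?thesis by simp
  next
    case False
    then obtain x where x: "x \<in> A" by auto
    define B where "B = {x, f x, f (f x)}"
    have fx: "f x \<in> A" "f (f x) \<in> A" "f x \<noteq> x" "f (f x) \<noteq> f x" using x less.prems by auto
    have "f (f x) \<noteq> x"
    proof
      assume "f (f x) = x"
      then have "f (f (f x)) = f x" by simp
      then show False using x less.prems by auto
    qed
    then have cB: "card B = 3" unfolding B_def using fx by auto
    have BA: "B \<subseteq> A" unfolding B_def using x fx by auto
    have cl: "\<forall>y\<in>A - B. f y \<in> A - B \<and> f (f (f y)) = y \<and> f y \<noteq> y"
    proof
      fix y assume y: "y \<in> A - B"
      have yy: "f (f (f y)) = y" "f y \<in> A" "f y \<noteq> y" using y less.prems by auto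
      have xx: "f (f (f x)) = x" using x less.prems by auto
      have "f y \<notin> B"
      proof
        assume "f y \<in> B"
        then have "f y = x \<or> f y = f x \<or> f y = f (f x)" unfolding B_def by auto
        then have "y = f (f x) \<or> y = x \<or> y = f x"
        proof (elim disjE)
          assume "f y = x" then have "f (f (f y)) = f (f x)" by simp
          then show ?thesis using yy(1) by simp
        next
          assume "f y = f x" then have "f (f (f y)) = f (f (f x))" by simp
          then show ?thesis using yy(1) xx by simp
        next
          assume "f y = f (f x)" then have "f (f (f y)) = f (f (f (f x)))" by simp
          then show ?thesis using yy(1) xx by simp
        qed
        then show False using y unfolding B_def by auto
      qed
      then show "f y \<in> A - B \<and> f (f (f y)) = y \<and> f y \<noteq> y" using yy by auto
    qed
    have fin: "finite (A - B)" using less.prems by auto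
    have eq: "card A = card (A - B) + 3"
    proof -
      have "card (A - B) = card A - card B" using card_Diff_subset[of B A] BA less.prems(1) finite_subset by blast
      moreover have "card B \<le> card A" using card_mono[OF less.prems(1) BA] .
      ultimately show ?thesis using cB by simp
    qed
    then have lt: "card (A - B) < card A" by simp
    have "3 dvd card (A - B)" using less.hyps[OF lt fin cl] .
    then show ?thesis using eq by simp
  qed
qed

lemma orbit2:
  fixes f :: "'b \<Rightarrow> 'b"
  shows "finite A \<Longrightarrow> (\<forall>x\<in>A. f x \<in> A \<and> f (f x) = x \<and> f x \<noteq> x) \<Longrightarrow> 2 dvd card A"
proof (induction "card A" arbitrary: A rule: less_induct)
  case (less A)
  show ?case
  proof (cases "A = {}")
    case True then show ?thesis by simp
  next
    case False
    then obtain x where x: "x \<in> A" by auto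
    define B where "B = {x, f x}"
    have fx: "f x \<in> A" "f x \<noteq> x" using x less.prems by auto
    then have cB: "card B = 2" unfolding B_def using fx by auto
    have BA: "B \<subseteq> A" unfolding B_def using x fx by auto
    have cl: "\<forall>y\<in>A - B. f y \<in> A - B \<and> f (f y) = y \<and> f y \<noteq> y"
    proof
      fix y assume y: "y \<in> A - B"
      have yy: "f (f y) = y" "f y \<in> A" "f y \<noteq> y" using y less.prems by auto
      have xx: "f (f x) = x" using x less.prems by auto
      have "f y \<notin> B"
      proof
        assume "f y \<in> B"
        then have "f y = x \<or> f y = f x" unfolding B_def by auto
        then have "y = f x \<or> y = x"
        proof (elim disjE)
          assume "f y = x" then have "f (f y) = f x" by simp
          then show ?thesis using yy(1) by simp
        next
          assume "f y = f x" then have "f (f y) = f (f x)" by simp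
          then show ?thesis using yy(1) xx by simp
        qed
        then show False using y unfolding B_def by auto
      qed
      then show "f y \<in> A - B \<and> f (f y) = y \<and> f y \<noteq> y" using yy by auto
    qed
    have fin: "finite (A - B)" using less.prems by auto
    have eq: "card A = card (A - B) + 2"
    proof -
      have "card (A - B) = card A - card B" using card_Diff_subset[of B A] BA less.prems(1) finite_subset by blast
      moreover have "card B \<le> card A" using card_mono[OF less.prems(1) BA] .
      ultimately show ?thesis using cB by simp
    qed
    then have lt: "card (A - B) < card A" by simp
    have "2 dvd card (A - B)" using less.hyps[OF lt fin cl] .
    then show ?thesis using eq by simp
  qed
qed



lemma two_ne_odd:
  assumes "(2::'a::{field,finite}) \<noteq> 0"
  shows "odd (card (UNIV :: 'a set))"
proof -
  have "2 dvd card (UNIV - {0::'a})"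
  proof (rule orbit2[where f = uminus])
    show "\<forall>x\<in>UNIV - {0::'a}. - x \<in> UNIV - {0} \<and> - (- x) = x \<and> - x \<noteq> x"
    proof
      fix x :: 'a assume x: "x \<in> UNIV - {0}"
      have "-x \<noteq> x"
      proof
        assume "-x = x"
        then have "x + x = x + - x" by simp
        also have "\<dots> = 0" by simp
        finally have "x + x = 0" .
        then have "2 * x = 0" unfolding mult_2 .
        then show False using x assms by auto
      qed
      then show "- x \<in> UNIV - {0} \<and> - (- x) = x \<and> - x \<noteq> x" using x by auto
    qed
  next
    show "finite (UNIV - {0::'a})" by (rule finite)
  qed
  moreover have "card (UNIV - {0::'a}) = card (UNIV :: 'a set) - 1" by (rule card_Diff_singleton) auto
  moreover have "card (UNIV :: 'a set) \<ge> 1" by (simp add: Suc_leI finite_UNIV_card_ge_0)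
  ultimately show ?thesis by (cases "card (UNIV :: 'a set)") auto
qed



lemma three_ne:
  assumes "(3::'a::{field,finite}) \<noteq> 0"
  shows "\<not> 3 dvd (card (UNIV :: 'a set))"
proof
  assume d: "3 dvd card (UNIV :: 'a set)"
  let ?f = "\<lambda>(x::'a, y::'a). (y, -x-y)"
  have "3 dvd card (UNIV - {(0::'a, 0::'a)})"
  proof (rule orbit3[where f = ?f])
    show "\<forall>p\<in>UNIV - {(0::'a, 0::'a)}. ?f p \<in> UNIV - {(0, 0)} \<and> ?f (?f (?f p)) = p \<and> ?f p \<noteq> p"
    proof
      fix p assume p: "p \<in> UNIV - {(0::'a, 0::'a)}"
      obtain x y where xy: "p = (x, y)" by (cases p)
      have "?f p \<noteq> p"
      proof
        assume "?f p = p"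
        then have "y = x" "-x-y = y" using xy by auto
        then have "3 * x = 0" proof -
          have "3 * x = x + x + x" by (simp add: algebra_simps)
          also have "\<dots> = 0" using \<open>y = x\<close> \<open>-x-y = y\<close> by (simp add: algebra_simps)
          finally show ?thesis .
        qed
        then have "x = 0" using assms by simp
        then show False using p xy \<open>y = x\<close> by auto
      qed
      moreover have "?f (?f (?f p)) = p" using xy by (simp add: algebra_simps)
      moreover have "?f p \<noteq> (0,0)" using xy p by auto
      ultimately show "?f p \<in> UNIV - {(0, 0)} \<and> ?f (?f (?f p)) = p \<and> ?f p \<noteq> p" by auto
    qed
  qed simp
  moreover have "card (UNIV - {(0::'a, 0::'a)}) = card (UNIV :: 'a set) * card (UNIV :: 'a set) - 1"
    proof -
    have "card (UNIV - {(0::'a, 0::'a)}) = card (UNIV :: ('a \<times> 'a) set) - 1"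
      by (rule card_Diff_singleton) auto
    moreover have "card (UNIV :: ('a \<times> 'a) set) = card (UNIV :: 'a set) * card (UNIV :: 'a set)"
      using card_cartesian_product[of "UNIV :: 'a set" "UNIV :: 'a set"] by simp
    ultimately show ?thesis by simp
  qed
  moreover have "card (UNIV :: 'a set) \<ge> 1" by (simp add: Suc_leI finite_UNIV_card_ge_0)
  ultimately have a: "3 dvd (card (UNIV :: 'a set) * card (UNIV :: 'a set) - 1)"
     and b: "3 dvd card (UNIV :: 'a set) * card (UNIV :: 'a set)"
     and c: "card (UNIV :: 'a set) * card (UNIV :: 'a set) \<ge> 1" using d by auto
  have "3 dvd (card (UNIV :: 'a set) * card (UNIV :: 'a set) - (card (UNIV :: 'a set) * card (UNIV :: 'a set) - 1))"
    using dvd_diff_nat[OF b a] .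
  then have "(3::nat) dvd 1" using c by simp
  then show False by simp
qed




lemma gamma_line:
  fixes \<mu> :: "'a::field"
  assumes "H \<in> Gamma_planes" "ell \<mu> \<subseteq> points_of_plane H"
  shows "9*\<mu> = 1"
proof -
  have "(\<exists>t. H = proj (1, -3*t, 3*t^2, -(t^3))) \<or> H = proj (0,0,0,1)"
    using assms(1) unfolding Gamma_planes_def by blast
  then show ?thesis
  proof
    assume "\<exists>t. H = proj (1, -3*t, 3*t^2, -(t^3))"
    then obtain t where H: "H = proj (1, -3*t, 3*t^2, -(t^3))" by blast
    have h: "1 + 3*t^2 = 0" "(-3*t)*\<mu> + -(t^3) = 0" using assms(2) unfolding H ell_sub by auto
    have t0: "t \<noteq> 0" using h(1) by auto
    have e: "t * (t^2 + 3*\<mu>) = -((-3*t)*\<mu> + -(t^3))"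
      by (simp add: algebra_simps power3_eq_cube power2_eq_square)
    have "t * (t^2 + 3*\<mu>) = 0" unfolding e h(2) by simp
    then have "t^2 = -3*\<mu>" using t0 by (simp add: eq_neg_iff_add_eq_0)
    then have "1 + 3*(-3*\<mu>) = 0" using h(1) by simp
    then show ?thesis by (simp add: algebra_simps)
  next
    assume H: "H = proj (0,0,0,1)"
    have "(0::'a)*\<mu> + 1 = 0" using assms(2) unfolding H ell_sub by blast
    then show ?thesis by simp
  qed
qed

lemma nine_false:
  fixes \<mu> :: "'a::{field,finite}"
  assumes "\<mu> \<noteq> 1"
    and "odd (card (UNIV :: 'a set)) \<and> card (UNIV :: 'a set) mod 3 \<noteq> 0 \<Longrightarrow> \<mu> \<noteq> 1/9"
    and n: "9*\<mu> = 1"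
  shows False
proof (cases "odd (card (UNIV :: 'a set)) \<and> card (UNIV :: 'a set) mod 3 \<noteq> 0")
  case True
  have "(9::'a) \<noteq> 0" using n by auto
  then have "\<mu> = 1/9" using n by (simp add: eq_divide_eq mult.commute)
  then show False using assms(2) True by blast
next
  case False
  then have "even (card (UNIV :: 'a set)) \<or> 3 dvd card (UNIV :: 'a set)" by auto
  then show False
  proof
    assume "even (card (UNIV :: 'a set))"
    then have two: "(2::'a) = 0" using two_ne_odd by blast
    have "9*\<mu> = \<mu> + 2*(4*\<mu>)" by (simp add: algebra_simps)
    then have "9*\<mu> = \<mu>" using two by simp
    then show False using n assms(1) by simp
  next
    assume "3 dvd card (UNIV :: 'a set)"
    then have three: "(3::'a) = 0" using three_ne by blast
    have "9*\<mu> = 3*(3*\<mu>)" by (simp add: algebra_simps)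
    then have "9*\<mu> = 0" using three by simp
    then show False using n by simp
  qed
qed



theorem lemma5p4:
  fixes \<mu> :: "'a::{field,finite}"
  assumes "card (UNIV :: 'a set) \<ge> 5"
    and "\<mu> \<noteq> 0" and "\<mu> \<noteq> 1"
    and "odd (card (UNIV :: 'a set)) \<and> card (UNIV :: 'a set) mod 3 \<noteq> 0 \<Longrightarrow> \<mu> \<noteq> 1/9"
  shows "card {H \<in> PG3_planes. one_C_bar_plane H \<and> ell \<mu> \<subseteq> points_of_plane H} =
    (if (\<exists>x. \<mu> = x^2) then N1_tilde \<mu> else N1_tilde \<mu> + 1)"
proof -
  define f where "f c = proj (1, c, -1, -(\<mu>*c))" for c :: 'a
  define P1 where "P1 = proj (0::'a, 1, 0, -\<mu>)"
  define T where "T = {c::'a. c \<noteq> 0 \<and> card {t. t^3 + c*t^2 - t - \<mu>*c = 0} = 1}"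
  define X where "X = (if (\<exists>x. \<mu> = x^2) then {} else {P1})"
  let ?S = "{H \<in> PG3_planes. one_C_bar_plane H \<and> ell \<mu> \<subseteq> points_of_plane H}"
  let ?cnt = "\<lambda>H. card {P \<in> twisted_cubic. incident H P}"
  have cnt_f: "?cnt (f c) = card {t. t^3 + c*t^2 - t - \<mu>*c = 0}" for c
  proof -
    have "\<And>t. dot4 (1, c, -1, -(\<mu>*c)) (t^3,t^2,t,1) = t^3 + c*t^2 - t - \<mu>*c"
      by (simp add: dot4_def algebra_simps)
    moreover have "dot4 (1, c, -1, -(\<mu>*c)) (1,0,0,0) = 1" by (simp add: dot4_def)
    ultimately show ?thesis unfolding f_def tc_card by simp
  qed
  have cnt_P1: "?cnt P1 = card {t. t^2 = \<mu>} + 1"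
  proof -
    have "\<And>t. dot4 (0::'a, 1, 0, -\<mu>) (t^3,t^2,t,1) = 0 \<longleftrightarrow> t^2 = \<mu>"
      by (simp add: dot4_def)
    moreover have "dot4 (0::'a, 1, 0, -\<mu>) (1,0,0,0) = 0" by (simp add: dot4_def)
    ultimately show ?thesis unfolding P1_def tc_card by simp
  qed
  have P1_one: "?cnt P1 = 1 \<longleftrightarrow> \<not> (\<exists>x. \<mu> = x^2)"
  proof -
    have "?cnt P1 = 1 \<longleftrightarrow> {t. t^2 = \<mu>} = {}" unfolding cnt_P1 by simp
    also have "\<dots> \<longleftrightarrow> \<not> (\<exists>x. \<mu> = x^2)" by auto
    finally show ?thesis .
  qed
  have c0: "card {t::'a. t^3 + 0*t^2 - t - \<mu>*0 = 0} \<noteq> 1"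
  proof -
    have "{0, 1} \<subseteq> {t::'a. t^3 + 0*t^2 - t - \<mu>*0 = 0}" by auto
    then have "card {0::'a, 1} \<le> card {t::'a. t^3 + 0*t^2 - t - \<mu>*0 = 0}"
      by (rule card_mono[rotated]) simp
    then show ?thesis by simp
  qed
  have lineF: "ell \<mu> \<subseteq> points_of_plane (f c)" for c
    unfolding f_def ell_sub by simp
  have lineP1: "ell \<mu> \<subseteq> points_of_plane P1"
    unfolding P1_def ell_sub by simp
  have noG: "H \<notin> Gamma_planes" if "ell \<mu> \<subseteq> points_of_plane H" for H
    using gamma_line[OF _ that] nine_false[OF assms(3) assms(4)] by blast
  have memS: "H \<in> ?S \<longleftrightarrow> H \<in> PG3_planes \<and> ell \<mu> \<subseteq> points_of_plane H \<and> ?cnt H = 1" for H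
    unfolding one_C_bar_plane_def using noG by blast
  have fP: "f c \<in> PG3_planes" for c unfolding PG3_planes_def f_def
    by (rule CollectI, rule exI[of _ "(1, c, -1, -(\<mu>*c))"]) simp
  have P1P: "P1 \<in> PG3_planes" unfolding PG3_planes_def P1_def
    by (rule CollectI, rule exI[of _ "(0, 1, 0, -\<mu>)"]) simp
  have Seq: "?S = f ` T \<union> X"
  proof (rule set_eqI)
    fix H
    show "H \<in> ?S \<longleftrightarrow> H \<in> f ` T \<union> X"
    proof
      assume "H \<in> ?S"
      then have H: "H \<in> PG3_planes" "ell \<mu> \<subseteq> points_of_plane H" "?cnt H = 1" using memS by auto
      obtain a0 a1 a2 a3 where a: "H = proj (a0,a1,a2,a3)" "(a0,a1,a2,a3) \<noteq> (0,0,0,0)"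
        using H(1) unfolding PG3_planes_def by auto
      have l: "a0 + a2 = 0" "a1*\<mu> + a3 = 0" using H(2) unfolding a(1) ell_sub by auto
      have a2: "a2 = -a0" using l(1) by (simp add: eq_neg_iff_add_eq_0 add.commute)
      have a3: "a3 = -(a1*\<mu>)" using l(2) by (simp add: eq_neg_iff_add_eq_0 add.commute)
      show "H \<in> f ` T \<union> X"
      proof (cases "a0 = 0")
        case False
        define c where "c = a1/a0"
        have "smult4 (1/a0) (a0,a1,a2,a3) = (1, c, -1, -(\<mu>*c))"
          using False unfolding c_def smult4_def a2 a3
          by (simp add: field_simps)
        then have Hf: "H = f c" unfolding a(1) f_def using proj_smult[of "1/a0" "(a0,a1,a2,a3)"] False by simp
        have "card {t. t^3 + c*t^2 - t - \<mu>*c = 0} = 1" using H(3) cnt_f Hf by simp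
        moreover then have "c \<noteq> 0" using c0 by auto
        ultimately have "c \<in> T" unfolding T_def by simp
        then show ?thesis using Hf by auto
      next
        case True
        then have a1: "a1 \<noteq> 0" using a(2) a2 a3 by auto
        have "smult4 (1/a1) (a0,a1,a2,a3) = (0, 1, 0, -\<mu>)"
          using True a1 unfolding smult4_def a2 a3
          by (simp add: field_simps)
        then have HP: "H = P1" unfolding a(1) P1_def using proj_smult[of "1/a1" "(a0,a1,a2,a3)"] a1 by simp
        then have "\<not> (\<exists>x. \<mu> = x^2)" using H(3) P1_one by simp
        then show ?thesis using HP unfolding X_def by simp
      qed
    next
      assume "H \<in> f ` T \<union> X"
      then show "H \<in> ?S"
      proof
        assume "H \<in> f ` T"
        then obtain c where c: "c \<in> T" "H = f c" by auto
        show "H \<in> ?S" unfolding memS c(2) using fP lineF cnt_f c(1) unfolding T_def by simp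
      next
        assume "H \<in> X"
        then have "H = P1" "\<not> (\<exists>x. \<mu> = x^2)" unfolding X_def by (auto split: if_splits)
        then show "H \<in> ?S" unfolding memS using P1P lineP1 P1_one by simp
      qed
    qed
  qed
  have finj: "inj f"
  proof (rule injI)
    fix c d assume "f c = f d"
    then obtain k where "k \<noteq> 0" "(1, d, -1, -(\<mu>*d)) = smult4 k (1, c, -1, -(\<mu>*c))"
      unfolding f_def using proj_eqD by blast
    then show "c = d" by (simp add: smult4_def)
  qed
  have fP1: "f c \<noteq> P1" for c
  proof
    assume "f c = P1"
    then obtain k where "k \<noteq> 0" "(0, 1, 0, -\<mu>) = smult4 k (1, c, -1, -(\<mu>*c))"
      unfolding f_def P1_def using proj_eqD by blast
    then show False by (simp add: smult4_def)
  qed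
  have cT: "card (f ` T) = card T" by (rule card_image) (meson inj_on_subset subset_UNIV finj)
  have disj: "f ` T \<inter> X = {}" unfolding X_def using fP1 by auto
  have "card ?S = card (f ` T) + card X" unfolding Seq by (rule card_Un_disjoint) (auto simp: disj)
  moreover have "N1_tilde \<mu> = card T" unfolding N1_tilde_def T_def ..
  ultimately show ?thesis unfolding cT X_def by simp
qed


end
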